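(* Let $A,B$ be types with $A \sim B$, $\ell$ a label, and $\rho_1,\rho_{21},\rho_{22}$ rows with $\rho_{21}\odot\rho_{22}$ defined. If $\rho_1 \sim \rho_{21}\odot\rho_{22}$ and $\ell\notin\mathit{dom}(\rho_{21})$, then there exist rows $\rho_{11},\rho_{12}$ (with $\rho_{11}$ of the form $\ell_1{:}C_1;\dots;\ell_n{:}C_n;\cdot$) such that: (i) $\rho_1 \equiv \rho_{11}\odot\rho_{12}$; (ii) $\rho_{11}\odot(\ell{:}A;\cdot)\odot\rho_{12} \sim \rho_{21}\odot(\ell{:}B;\cdot)\odot\rho_{22}$; (iii) if $\rho_{21}\odot\rho_{22}$ ends with $\star$, then $\rho_{11}\odot(\ell{:}A;\cdot)\odot\rho_3\odot\rho_{12} \sim \rho_{21}\odot(\ell{:}B;\cdot)\odot\rho_{22}$ for every row $\rho_3$ of the form $\ell'_1{:}D_1;\dots;\ell'_m{:}D_m;\cdot$ with $\mathit{dom}(\rho_3)\cap\mathit{dom}(\rho_{21}\odot\rho_{22})=\emptyset$; (iv) $\ell\notin\mathit{dom}(\rho_{11})$.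
   Context: Types and rows share one grammar: $A,B,C,\rho ::= X \mid \alpha \mid \star \mid \iota \mid A\to B \mid \forall X{:}K.\,A \mid [\rho] \mid \langle\rho\rangle \mid \cdot \mid \ell{:}A;\rho$, where $X$ ranges over type variables (bound by $\forall$), $\alpha$ over type names, $\star$ is the dynamic type (also serving as the dynamic row), $\iota$ over base types, $[\rho]$ and $\langle\rho\rangle$ are record and variant types, $\cdot$ is the empty row, $\ell$ ranges over labels, and $K\in\{\mathsf T,\mathsf R\}$ is a kind. Types are identified up to renaming of bound variables; $\mathit{ftv}(A)$ is the set of free type variables. $\mathbf{QPoly}(A)$ holds iff $A$ is not of the form $\forall X{:}K.\,B$ and $\star$ occurs in $A$. Row concatenation $\rho_1\odot\rho_2$ is defined only when $\rho_1=\ell_1{:}A_1;\dots;\ell_n{:}A_n;\cdot$, and then equals $\ell_1{:}A_1;\dots;\ell_n{:}A_n;\rho_2$. $\mathit{dom}(\rho)$ is the set of labels in the top-level label prefix of $\rho$. A row $\rho$ ends with $\star$ if $\rho=\rho'\odot\star$ for some $\rho'$. Type equivalence $\equiv$ is the least equivalence relation that is a congruence for $\to$, $\forall X{:}K.\,-$, $[-]$, $\langle-\rangle$ and $\ell{:}-;-$, and contains $\ell{:}A;\ell'{:}B;\rho \equiv \ell'{:}B;\ell{:}A;\rho$ whenever $\ell\neq\ell'$. The relation $\sim$ is defined inductively: $A\sim A$; $\star\sim A$; $A\sim\star$; $A_1\to A_2\sim B_1\to B_2$ if $A_1\sim B_1$ and $A_2\sim B_2$; $\forall X{:}K.A\sim\forall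 X{:}K.B$ if $A\sim B$; $\forall X{:}K.A\sim B$ if $\mathbf{QPoly}(B)$, $X\notin\mathit{ftv}(B)$ and $A\sim B$; $A\sim\forall X{:}K.B$ if $\mathbf{QPoly}(A)$, $X\notin\mathit{ftv}(A)$ and $A\sim B$; $[\rho_1]\sim[\rho_2]$ and $\langle\rho_1\rangle\sim\langle\rho_2\rangle$ if $\rho_1\sim\rho_2$; $\ell{:}A;\rho_1\sim\ell{:}B;\rho_2$ if $A\sim B$ and $\rho_1\sim\rho_2$; $\ell{:}A;\rho_1\sim\rho_2$ if $\ell\notin\mathit{dom}(\rho_2)$, $\rho_2$ ends with $\star$ and $\rho_1\sim\rho_2$; $\rho_1\sim\ell{:}B;\rho_2$ if $\ell\notin\mathit{dom}(\rho_1)$, $\rho_1$ ends with $\star$ and $\rho_1\sim\rho_2$. *)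

theory Defs
  imports Main
begin

datatype kind = KT | KR

type_synonym label = string

text \<open>Types and rows share one grammar. Type variables bound by \<forall> are
  de Bruijn indices (so alpha-equivalence is syntactic equality).\<close>
datatype ty =
    TVar nat
  | TName nat
  | Dyn
  | Base nat
  | Fun ty ty
  | All kind ty         (* \<forall>X:K. A, X = index 0 in body *)
  | Record ty
  | Variant ty
  | REmpty
  | RExt label ty ty

fun lift :: "nat \<Rightarrow> ty \<Rightarrow> ty" where
  "lift k (TVar n) = (if n < k then TVar n else TVar (Suc n))"
| "lift k (TName a) = TName a"
| "lift k Dyn = Dyn"
| "lift k (Base i) = Base i"
| "lift k (Fun A B) = Fun (lift k A) (lift k B)"
| "lift k (All K A) = All K (lift (Suc k) A)"
| "lift k (Record r) = Record (lift k r)"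
| "lift k (Variant r) = Variant (lift k r)"
| "lift k REmpty = REmpty"
| "lift k (RExt l A r) = RExt l (lift k A) (lift k r)"

fun has_dyn :: "ty \<Rightarrow> bool" where
  "has_dyn (TVar n) = False"
| "has_dyn (TName a) = False"
| "has_dyn Dyn = True"
| "has_dyn (Base i) = False"
| "has_dyn (Fun A B) = (has_dyn A \<or> has_dyn B)"
| "has_dyn (All K A) = has_dyn A"
| "has_dyn (Record r) = has_dyn r"
| "has_dyn (Variant r) = has_dyn r"
| "has_dyn REmpty = False"
| "has_dyn (RExt l A r) = (has_dyn A \<or> has_dyn r)"

fun is_all :: "ty \<Rightarrow> bool" where
  "is_all (All K A) = True"
| "is_all _ = False"

definition QPoly :: "ty \<Rightarrow> bool" where
  "QPoly A \<longleftrightarrow> \<not> is_all A \<and> has_dyn A"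

fun closed_row :: "ty \<Rightarrow> bool" where
  "closed_row REmpty = True"
| "closed_row (RExt l A r) = closed_row r"
| "closed_row _ = False"

text \<open>Row concatenation; only meaningful when the first argument is a closed row.\<close>
fun rcat :: "ty \<Rightarrow> ty \<Rightarrow> ty" where
  "rcat REmpty r = r"
| "rcat (RExt l A r1) r = RExt l A (rcat r1 r)"
| "rcat r1 r = undefined"

fun rdom :: "ty \<Rightarrow> label set" where
  "rdom (RExt l A r) = insert l (rdom r)"
| "rdom _ = {}"

definition ends_dyn :: "ty \<Rightarrow> bool" where
  "ends_dyn r \<longleftrightarrow> (\<exists>r'. closed_row r' \<and> r = rcat r' Dyn)"

inductive is_type and is_row where
  "is_type (TVar n)"
| "is_type (TName a)"
| "is_type Dyn"
| "is_type (Base i)"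
| "is_type A \<Longrightarrow> is_type B \<Longrightarrow> is_type (Fun A B)"
| "is_type A \<Longrightarrow> is_type (All K A)"
| "is_row r \<Longrightarrow> is_type (Record r)"
| "is_row r \<Longrightarrow> is_type (Variant r)"
| "is_row (TVar n)"
| "is_row (TName a)"
| "is_row Dyn"
| "is_row REmpty"
| "is_type A \<Longrightarrow> is_row r \<Longrightarrow> is_row (RExt l A r)"

inductive ty_eqv :: "ty \<Rightarrow> ty \<Rightarrow> bool" (infix "\<equiv>\<^sub>t" 50) where
  eqv_refl: "A \<equiv>\<^sub>t A"
| eqv_sym: "A \<equiv>\<^sub>t B \<Longrightarrow> B \<equiv>\<^sub>t A"
| eqv_trans: "A \<equiv>\<^sub>t B \<Longrightarrow> B \<equiv>\<^sub>t C \<Longrightarrow> A \<equiv>\<^sub>t C"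
| eqv_fun: "A1 \<equiv>\<^sub>t B1 \<Longrightarrow> A2 \<equiv>\<^sub>t B2 \<Longrightarrow> Fun A1 A2 \<equiv>\<^sub>t Fun B1 B2"
| eqv_all: "A \<equiv>\<^sub>t B \<Longrightarrow> All K A \<equiv>\<^sub>t All K B"
| eqv_rec: "A \<equiv>\<^sub>t B \<Longrightarrow> Record A \<equiv>\<^sub>t Record B"
| eqv_var: "A \<equiv>\<^sub>t B \<Longrightarrow> Variant A \<equiv>\<^sub>t Variant B"
| eqv_ext: "A \<equiv>\<^sub>t B \<Longrightarrow> r1 \<equiv>\<^sub>t r2 \<Longrightarrow> RExt l A r1 \<equiv>\<^sub>t RExt l B r2"
| eqv_swap: "l \<noteq> l' \<Longrightarrow> RExt l A (RExt l' B r) \<equiv>\<^sub>t RExt l' B (RExt l A r)"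

inductive consistent :: "ty \<Rightarrow> ty \<Rightarrow> bool" (infix "\<sim>" 50) where
  c_refl: "A \<sim> A"
| c_dynL: "Dyn \<sim> A"
| c_dynR: "A \<sim> Dyn"
| c_fun: "A1 \<sim> B1 \<Longrightarrow> A2 \<sim> B2 \<Longrightarrow> Fun A1 A2 \<sim> Fun B1 B2"
| c_all: "A \<sim> B \<Longrightarrow> All K A \<sim> All K B"
| c_allL: "QPoly B \<Longrightarrow> A \<sim> lift 0 B \<Longrightarrow> All K A \<sim> B"
| c_allR: "QPoly A \<Longrightarrow> lift 0 A \<sim> B \<Longrightarrow> A \<sim> All K B"
| c_rec: "r1 \<sim> r2 \<Longrightarrow> Record r1 \<sim> Record r2"
| c_var: "r1 \<sim> r2 \<Longrightarrow> Variant r1 \<sim> Variant r2"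
| c_ext: "A \<sim> B \<Longrightarrow> r1 \<sim> r2 \<Longrightarrow> RExt l A r1 \<sim> RExt l B r2"
| c_extL: "l \<notin> rdom r2 \<Longrightarrow> ends_dyn r2 \<Longrightarrow> r1 \<sim> r2 \<Longrightarrow> RExt l A r1 \<sim> r2"
| c_extR: "l \<notin> rdom r1 \<Longrightarrow> ends_dyn r1 \<Longrightarrow> r1 \<sim> r2 \<Longrightarrow> r1 \<sim> RExt l B r2"

end

theory Submission
  imports Defs
begin

fun ed :: "ty \<Rightarrow> bool" where
  "ed Dyn = True"
| "ed (RExt l A r) = ed r"
| "ed _ = False"

lemma ed_imp: "ed r \<Longrightarrow> \<exists>r'. closed_row r' \<and> r = rcat r' Dyn"
proof (induction r)
  case Dyn then show ?case by (intro exI[of _ REmpty]) simp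
next
  case (RExt l A r)
  then obtain r' where "closed_row r'" "r = rcat r' Dyn" by auto
  then show ?case by (intro exI[of _ "RExt l A r'"]) simp
qed auto

lemma imp_ed: "closed_row r' \<Longrightarrow> ed (rcat r' Dyn)"
  by (induction r') auto

lemma ends_dyn_ed: "ends_dyn r = ed r"
  unfolding ends_dyn_def using ed_imp imp_ed by blast

lemma ed_rcat[simp]: "closed_row r1 \<Longrightarrow> ed (rcat r1 r2) = ed r2"
  by (induction r1) auto

lemma rdom_rcat[simp]: "closed_row r1 \<Longrightarrow> rdom (rcat r1 r2) = rdom r1 \<union> rdom r2"
  by (induction r1) auto

lemma closed_rcat[simp]: "closed_row r1 \<Longrightarrow> closed_row (rcat r1 r2) = closed_row r2"
  by (induction r1) auto

lemma rcat_assoc: "closed_row r1 \<Longrightarrow> rcat (rcat r1 r2) r3 = rcat r1 (rcat r2 r3)"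
  by (induction r1) auto

inductive_cases rowE: "is_row (RExt l A r)"
inductive_cases rowAllE: "is_row (All K A)"

lemma row_rcat: "closed_row r1 \<Longrightarrow> is_row r1 \<Longrightarrow> is_row r2 \<Longrightarrow> is_row (rcat r1 r2)"
  by (induction r1) (auto elim: rowE intro: is_type_is_row.intros)

lemma eqv_rdom: "A \<equiv>\<^sub>t B \<Longrightarrow> rdom A = rdom B"
  by (induction rule: ty_eqv.induct) auto

lemma eqv_ed: "A \<equiv>\<^sub>t B \<Longrightarrow> ed A = ed B"
  by (induction rule: ty_eqv.induct) auto

lemma extL_lem: "closed_row \<rho>3 \<Longrightarrow> rdom \<rho>3 \<inter> rdom \<tau> = {} \<Longrightarrow> ed \<tau> \<Longrightarrow> \<sigma> \<sim> \<tau> \<Longrightarrow> rcat \<rho>3 \<sigma> \<sim> \<tau>"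
  by (induction \<rho>3) (auto intro: c_extL simp: ends_dyn_ed)

lemma extR_lem: "closed_row \<rho> \<Longrightarrow> rdom \<rho> \<inter> rdom \<sigma> = {} \<Longrightarrow> ed \<sigma> \<Longrightarrow> \<sigma> \<sim> \<tau> \<Longrightarrow> \<sigma> \<sim> rcat \<rho> \<tau>"
  by (induction \<rho>) (auto intro: c_extR simp: ends_dyn_ed)

lemma cong_lem: "closed_row \<rho> \<Longrightarrow> \<sigma> \<sim> \<tau> \<Longrightarrow> rcat \<rho> \<sigma> \<sim> rcat \<rho> \<tau>"
  by (induction \<rho>) (auto intro: c_ext c_refl)

lemma swapin: "closed_row \<rho> \<Longrightarrow> l \<notin> rdom \<rho> \<Longrightarrow> RExt l D (rcat \<rho> \<sigma>) \<equiv>\<^sub>t rcat \<rho> (RExt l D \<sigma>)"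
proof (induction \<rho>)
  case (RExt l' C \<rho>')
  then have "l \<noteq> l'" by auto
  then have "RExt l D (RExt l' C (rcat \<rho>' \<sigma>)) \<equiv>\<^sub>t RExt l' C (RExt l D (rcat \<rho>' \<sigma>))"
    by (rule eqv_swap)
  moreover have "RExt l' C (RExt l D (rcat \<rho>' \<sigma>)) \<equiv>\<^sub>t RExt l' C (rcat \<rho>' (RExt l D \<sigma>))"
    using RExt by (auto intro: eqv_ext eqv_refl)
  ultimately show ?case by (auto intro: eqv_trans)
qed (auto intro: eqv_refl)

definition CC where
 "CC A B l \<rho>1 \<rho>21 \<rho>22 \<longleftrightarrow> (\<exists>\<rho>11 \<rho>12. is_row \<rho>11 \<and> is_row \<rho>12 \<and> closed_row \<rho>11 \<and>
           \<rho>1 \<equiv>\<^sub>t rcat \<rho>11 \<rho>12 \<and>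
           rcat \<rho>11 (RExt l A \<rho>12) \<sim> rcat \<rho>21 (RExt l B \<rho>22) \<and>
           (ends_dyn (rcat \<rho>21 \<rho>22) \<longrightarrow>
              (\<forall>\<rho>3. is_row \<rho>3 \<and> closed_row \<rho>3 \<and> rdom \<rho>3 \<inter> rdom (rcat \<rho>21 \<rho>22) = {} \<longrightarrow>
                 rcat \<rho>11 (RExt l A (rcat \<rho>3 \<rho>12)) \<sim> rcat \<rho>21 (RExt l B \<rho>22))) \<and>
           l \<notin> rdom \<rho>11)"

lemma base_case:
  assumes "A \<sim> B" "is_row \<rho>1" "\<rho>1 \<sim> \<rho>22"
  shows "CC A B l \<rho>1 REmpty \<rho>22"
proof -
  have iii: "rcat REmpty (RExt l A (rcat \<rho>3 \<rho>1)) \<sim> rcat REmpty (RExt l B \<rho>22)"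
    if "ends_dyn (rcat REmpty \<rho>22)"
    "is_row \<rho>3 \<and> closed_row \<rho>3 \<and> rdom \<rho>3 \<inter> rdom (rcat REmpty \<rho>22) = {}" for \<rho>3
  proof -
    have "rcat \<rho>3 \<rho>1 \<sim> \<rho>22" using extL_lem[of \<rho>3 \<rho>22 \<rho>1] assms that by (auto simp: ends_dyn_ed)
    then show ?thesis using assms by (auto intro: c_ext)
  qed
  show ?thesis unfolding CC_def
    apply (rule exI[of _ REmpty], rule exI[of _ \<rho>1])
    using iii assms by (auto intro: c_ext eqv_refl is_type_is_row.intros)
qed

lemma refl_case:
  assumes "A \<sim> B" "closed_row \<rho>21" "is_row \<rho>21" "is_row \<rho>22" "l \<notin> rdom \<rho>21"
  shows "CC A B l (rcat \<rho>21 \<rho>22) \<rho>21 \<rho>22"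
proof -
  have iii: "rcat \<rho>21 (RExt l A (rcat \<rho>3 \<rho>22)) \<sim> rcat \<rho>21 (RExt l B \<rho>22)"
    if "ends_dyn (rcat \<rho>21 \<rho>22)"
    "is_row \<rho>3 \<and> closed_row \<rho>3 \<and> rdom \<rho>3 \<inter> rdom (rcat \<rho>21 \<rho>22) = {}" for \<rho>3
  proof -
    have "rcat \<rho>3 \<rho>22 \<sim> \<rho>22" using extL_lem[of \<rho>3 \<rho>22 \<rho>22] assms that by (auto simp: ends_dyn_ed intro: c_refl)
    then show ?thesis using assms by (auto intro: c_ext cong_lem)
  qed
  show ?thesis unfolding CC_def
    apply (rule exI[of _ \<rho>21], rule exI[of _ \<rho>22])
    using iii assms by (auto intro: c_ext eqv_refl cong_lem c_refl)
qed

lemma dynL_case: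
  assumes "A \<sim> B" "closed_row \<rho>21" "l \<notin> rdom \<rho>21"
  shows "CC A B l Dyn \<rho>21 \<rho>22"
proof -
  have iii: "rcat REmpty (RExt l A (rcat \<rho>3 Dyn)) \<sim> rcat \<rho>21 (RExt l B \<rho>22)"
    if "ends_dyn (rcat \<rho>21 \<rho>22)"
    "is_row \<rho>3 \<and> closed_row \<rho>3 \<and> rdom \<rho>3 \<inter> rdom (rcat \<rho>21 \<rho>22) = {}" for \<rho>3
  proof -
    have "rcat \<rho>3 Dyn \<sim> \<rho>22" using extL_lem[of \<rho>3 \<rho>22 Dyn] assms that by (auto simp: ends_dyn_ed intro: c_dynL)
    then have "RExt l A (rcat \<rho>3 Dyn) \<sim> RExt l B \<rho>22" using assms by (auto intro: c_ext)
    then show ?thesis using extR_lem[of \<rho>21 "RExt l A (rcat \<rho>3 Dyn)"] assms that by (auto simp: imp_ed)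
  qed
  have ii: "RExt l A Dyn \<sim> rcat \<rho>21 (RExt l B \<rho>22)"
    using extR_lem[of \<rho>21 "RExt l A Dyn"] assms by (auto intro: c_ext c_dynL)
  show ?thesis unfolding CC_def
    apply (rule exI[of _ REmpty], rule exI[of _ Dyn])
    using iii ii assms by (auto intro: eqv_refl is_type_is_row.intros)
qed

lemma ext_case:
  assumes "CC A B l \<rho>1' \<rho>21' \<rho>22" "D \<sim> C" "is_type D" "l \<noteq> l'"
  shows "CC A B l (RExt l' D \<rho>1') (RExt l' C \<rho>21') \<rho>22"
proof -
  from assms(1) obtain \<rho>11 \<rho>12 where h: "is_row \<rho>11" "is_row \<rho>12" "closed_row \<rho>11"
    "\<rho>1' \<equiv>\<^sub>t rcat \<rho>11 \<rho>12" "rcat \<rho>11 (RExt l A \<rho>12) \<sim> rcat \<rho>21' (RExt l B \<rho>22)"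
    "ends_dyn (rcat \<rho>21' \<rho>22) \<longrightarrow>
              (\<forall>\<rho>3. is_row \<rho>3 \<and> closed_row \<rho>3 \<and> rdom \<rho>3 \<inter> rdom (rcat \<rho>21' \<rho>22) = {} \<longrightarrow>
                 rcat \<rho>11 (RExt l A (rcat \<rho>3 \<rho>12)) \<sim> rcat \<rho>21' (RExt l B \<rho>22))"
    "l \<notin> rdom \<rho>11"
    unfolding CC_def by blast
  have iii: "rcat (RExt l' D \<rho>11) (RExt l A (rcat \<rho>3 \<rho>12)) \<sim> rcat (RExt l' C \<rho>21') (RExt l B \<rho>22)"
    if "ends_dyn (rcat (RExt l' C \<rho>21') \<rho>22)"
    "is_row \<rho>3 \<and> closed_row \<rho>3 \<and> rdom \<rho>3 \<inter> rdom (rcat (RExt l' C \<rho>21') \<rho>22) = {}" for \<rho>3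
  proof -
    have "ends_dyn (rcat \<rho>21' \<rho>22)" using that(1) by (simp add: ends_dyn_ed)
    moreover have "rdom \<rho>3 \<inter> rdom (rcat \<rho>21' \<rho>22) = {}" using that(2) by auto
    ultimately have "rcat \<rho>11 (RExt l A (rcat \<rho>3 \<rho>12)) \<sim> rcat \<rho>21' (RExt l B \<rho>22)"
      using h(6) that(2) by blast
    then show ?thesis using assms by (auto intro: c_ext)
  qed
  show ?thesis unfolding CC_def
    apply (rule exI[of _ "RExt l' D \<rho>11"], rule exI[of _ \<rho>12])
    using iii h assms by (auto intro: c_ext eqv_ext eqv_refl is_type_is_row.intros)
qed

lemma extL_case_ne:
  assumes "CC A B l \<rho>1' \<rho>21 \<rho>22" "closed_row \<rho>21" "is_type D" "l \<noteq> l'"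
    "l' \<notin> rdom (rcat \<rho>21 \<rho>22)" "ends_dyn (rcat \<rho>21 \<rho>22)"
  shows "CC A B l (RExt l' D \<rho>1') \<rho>21 \<rho>22"
proof -
  from assms(1) obtain \<rho>11 \<rho>12 where h: "is_row \<rho>11" "is_row \<rho>12" "closed_row \<rho>11"
    "\<rho>1' \<equiv>\<^sub>t rcat \<rho>11 \<rho>12" "rcat \<rho>11 (RExt l A \<rho>12) \<sim> rcat \<rho>21 (RExt l B \<rho>22)"
    "ends_dyn (rcat \<rho>21 \<rho>22) \<longrightarrow>
              (\<forall>\<rho>3. is_row \<rho>3 \<and> closed_row \<rho>3 \<and> rdom \<rho>3 \<inter> rdom (rcat \<rho>21 \<rho>22) = {} \<longrightarrow>
                 rcat \<rho>11 (RExt l A (rcat \<rho>3 \<rho>12)) \<sim> rcat \<rho>21 (RExt l B \<rho>22))"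
    "l \<notin> rdom \<rho>11"
    unfolding CC_def by blast
  have nd: "l' \<notin> rdom (rcat \<rho>21 (RExt l B \<rho>22))" using assms by auto
  have ed: "ends_dyn (rcat \<rho>21 (RExt l B \<rho>22))" using assms by (auto simp: ends_dyn_ed)
  have iii: "rcat (RExt l' D \<rho>11) (RExt l A (rcat \<rho>3 \<rho>12)) \<sim> rcat \<rho>21 (RExt l B \<rho>22)"
    if "ends_dyn (rcat \<rho>21 \<rho>22)"
    "is_row \<rho>3 \<and> closed_row \<rho>3 \<and> rdom \<rho>3 \<inter> rdom (rcat \<rho>21 \<rho>22) = {}" for \<rho>3
  proof -
    have "rcat \<rho>11 (RExt l A (rcat \<rho>3 \<rho>12)) \<sim> rcat \<rho>21 (RExt l B \<rho>22)"
      using h(6) that by blast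
    then show ?thesis using nd ed by (auto intro: c_extL)
  qed
  have ii: "rcat (RExt l' D \<rho>11) (RExt l A \<rho>12) \<sim> rcat \<rho>21 (RExt l B \<rho>22)"
    using h(5) nd ed by (auto intro: c_extL)
  show ?thesis unfolding CC_def
    apply (rule exI[of _ "RExt l' D \<rho>11"], rule exI[of _ \<rho>12])
    using iii ii h assms by (auto intro: eqv_ext eqv_refl is_type_is_row.intros)
qed

lemma extL_case_eq:
  assumes "CC A B l \<rho>1' \<rho>21 \<rho>22" "closed_row \<rho>21" "is_type D"
    "l \<notin> rdom (rcat \<rho>21 \<rho>22)" "ends_dyn (rcat \<rho>21 \<rho>22)"
  shows "CC A B l (RExt l D \<rho>1') \<rho>21 \<rho>22"
proof -
  from assms(1) obtain \<rho>11 \<rho>12 where h: "is_row \<rho>11" "is_row \<rho>12" "closed_row \<rho>11"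
    "\<rho>1' \<equiv>\<^sub>t rcat \<rho>11 \<rho>12" "rcat \<rho>11 (RExt l A \<rho>12) \<sim> rcat \<rho>21 (RExt l B \<rho>22)"
    "ends_dyn (rcat \<rho>21 \<rho>22) \<longrightarrow>
              (\<forall>\<rho>3. is_row \<rho>3 \<and> closed_row \<rho>3 \<and> rdom \<rho>3 \<inter> rdom (rcat \<rho>21 \<rho>22) = {} \<longrightarrow>
                 rcat \<rho>11 (RExt l A (rcat \<rho>3 \<rho>12)) \<sim> rcat \<rho>21 (RExt l B \<rho>22))"
    "l \<notin> rdom \<rho>11"
    unfolding CC_def by blast
  have H: "rcat \<rho>11 (RExt l A (rcat \<rho>3 \<rho>12)) \<sim> rcat \<rho>21 (RExt l B \<rho>22)"
    if "is_row \<rho>3" "closed_row \<rho>3" "rdom \<rho>3 \<inter> rdom (rcat \<rho>21 \<rho>22) = {}" for \<rho>3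
    using h(6) assms(5) that by blast
  let ?X = "RExt l D REmpty"
  have Xr: "is_row ?X" using assms(3) by (auto intro: is_type_is_row.intros)
  have iii: "rcat \<rho>11 (RExt l A (rcat \<rho>3 (RExt l D \<rho>12))) \<sim> rcat \<rho>21 (RExt l B \<rho>22)"
    if "is_row \<rho>3 \<and> closed_row \<rho>3 \<and> rdom \<rho>3 \<inter> rdom (rcat \<rho>21 \<rho>22) = {}" for \<rho>3
  proof -
    have "rcat (rcat \<rho>3 ?X) \<rho>12 = rcat \<rho>3 (RExt l D \<rho>12)" using that by (simp add: rcat_assoc)
    moreover have "is_row (rcat \<rho>3 ?X)" using that Xr row_rcat by blast
    moreover have "closed_row (rcat \<rho>3 ?X)" using that by simp
    moreover have "rdom (rcat \<rho>3 ?X) \<inter> rdom (rcat \<rho>21 \<rho>22) = {}" using that assms(4) by auto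
    ultimately show ?thesis using H[of "rcat \<rho>3 ?X"] by simp
  qed
  have ii: "rcat \<rho>11 (RExt l A (RExt l D \<rho>12)) \<sim> rcat \<rho>21 (RExt l B \<rho>22)"
    using H[of ?X] Xr assms(4) by simp
  have i: "RExt l D \<rho>1' \<equiv>\<^sub>t rcat \<rho>11 (RExt l D \<rho>12)"
  proof -
    have "RExt l D \<rho>1' \<equiv>\<^sub>t RExt l D (rcat \<rho>11 \<rho>12)" using h(4) by (auto intro: eqv_ext eqv_refl)
    moreover have "RExt l D (rcat \<rho>11 \<rho>12) \<equiv>\<^sub>t rcat \<rho>11 (RExt l D \<rho>12)" using swapin h(3,7) by blast
    ultimately show ?thesis by (rule eqv_trans)
  qed
  show ?thesis unfolding CC_def
    apply (rule exI[of _ \<rho>11], rule exI[of _ "RExt l D \<rho>12"])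
    using iii ii i h assms by (auto intro: is_type_is_row.intros)
qed

lemma extR_case:
  assumes "CC A B l \<rho>1 \<rho>21' \<rho>22" "l \<noteq> l'" "l' \<notin> rdom \<rho>1" "ends_dyn \<rho>1"
  shows "CC A B l \<rho>1 (RExt l' C \<rho>21') \<rho>22"
proof -
  from assms(1) obtain \<rho>11 \<rho>12 where h: "is_row \<rho>11" "is_row \<rho>12" "closed_row \<rho>11"
    "\<rho>1 \<equiv>\<^sub>t rcat \<rho>11 \<rho>12" "rcat \<rho>11 (RExt l A \<rho>12) \<sim> rcat \<rho>21' (RExt l B \<rho>22)"
    "ends_dyn (rcat \<rho>21' \<rho>22) \<longrightarrow>
              (\<forall>\<rho>3. is_row \<rho>3 \<and> closed_row \<rho>3 \<and> rdom \<rho>3 \<inter> rdom (rcat \<rho>21' \<rho>22) = {} \<longrightarrow>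
                 rcat \<rho>11 (RExt l A (rcat \<rho>3 \<rho>12)) \<sim> rcat \<rho>21' (RExt l B \<rho>22))"
    "l \<notin> rdom \<rho>11"
    unfolding CC_def by blast
  have dom1: "rdom \<rho>1 = rdom \<rho>11 \<union> rdom \<rho>12" using eqv_rdom[OF h(4)] h(3) by simp
  have ed12: "ed \<rho>12" using eqv_ed[OF h(4)] h(3) assms(4) by (simp add: ends_dyn_ed)
  have iii: "rcat \<rho>11 (RExt l A (rcat \<rho>3 \<rho>12)) \<sim> rcat (RExt l' C \<rho>21') (RExt l B \<rho>22)"
    if "ends_dyn (rcat (RExt l' C \<rho>21') \<rho>22)"
    "is_row \<rho>3 \<and> closed_row \<rho>3 \<and> rdom \<rho>3 \<inter> rdom (rcat (RExt l' C \<rho>21') \<rho>22) = {}" for \<rho>3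
  proof -
    have "ends_dyn (rcat \<rho>21' \<rho>22)" using that(1) by (simp add: ends_dyn_ed)
    moreover have "rdom \<rho>3 \<inter> rdom (rcat \<rho>21' \<rho>22) = {}" using that(2) by auto
    ultimately have "rcat \<rho>11 (RExt l A (rcat \<rho>3 \<rho>12)) \<sim> rcat \<rho>21' (RExt l B \<rho>22)"
      using h(6) that(2) by blast
    moreover have "l' \<notin> rdom (rcat \<rho>11 (RExt l A (rcat \<rho>3 \<rho>12)))" using that(2) dom1 assms h(3) by auto
    moreover have "ends_dyn (rcat \<rho>11 (RExt l A (rcat \<rho>3 \<rho>12)))" using that(2) ed12 h(3) by (simp add: ends_dyn_ed)
    ultimately show ?thesis by (auto intro: c_extR)
  qed
  have ii: "rcat \<rho>11 (RExt l A \<rho>12) \<sim> rcat (RExt l' C \<rho>21') (RExt l B \<rho>22)"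
  proof -
    have "l' \<notin> rdom (rcat \<rho>11 (RExt l A \<rho>12))" using dom1 assms h(3) by auto
    moreover have "ends_dyn (rcat \<rho>11 (RExt l A \<rho>12))" using ed12 h(3) by (simp add: ends_dyn_ed)
    ultimately show ?thesis using h(5) by (auto intro: c_extR)
  qed
  show ?thesis unfolding CC_def
    apply (rule exI[of _ \<rho>11], rule exI[of _ \<rho>12])
    using iii ii h by blast
qed

inductive_cases rowFunE: "is_row (Fun A B)"
inductive_cases rowRecE: "is_row (Record A)"
inductive_cases rowVarE: "is_row (Variant A)"

lemma closed_cases: "closed_row r \<Longrightarrow> r = REmpty \<or> (\<exists>l C r'. r = RExt l C r' \<and> closed_row r')"
  by (cases r) auto

lemma main:
  assumes "\<rho>1 \<sim> r2" "A \<sim> B"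
  shows "\<rho>1 \<sim> r2 \<Longrightarrow> is_row \<rho>1 \<Longrightarrow> closed_row \<rho>21 \<Longrightarrow> is_row \<rho>21 \<Longrightarrow> is_row \<rho>22 \<Longrightarrow>
    r2 = rcat \<rho>21 \<rho>22 \<Longrightarrow> l \<notin> rdom \<rho>21 \<Longrightarrow> CC A B l \<rho>1 \<rho>21 \<rho>22"
  using assms(1)
proof (induction arbitrary: \<rho>21 \<rho>22 rule: consistent.induct)
  case (c_refl X)
  then show ?case using refl_case assms(2) by blast
next
  case (c_dynL X)
  then show ?case using dynL_case assms(2) by blast
next
  case (c_dynR X)
  from closed_cases[OF c_dynR(3)] show ?case
  proof
    assume "\<rho>21 = REmpty" then show ?thesis using c_dynR base_case assms(2) by auto
  next
    assume "\<exists>l C r'. \<rho>21 = RExt l C r' \<and> closed_row r'"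
    then show ?thesis using c_dynR by auto
  qed
next
  case (c_fun A1 B1 A2 B2) then show ?case using rowFunE by blast
next
  case (c_all A B K) then show ?case using rowAllE by blast
next
  case (c_allL B A K) then show ?case using rowAllE by blast
next
  case (c_allR X Y K)
  from closed_cases[OF c_allR(6)] show ?case
  proof
    assume "\<rho>21 = REmpty" then show ?thesis using c_allR.prems(1,2,5,6) base_case assms(2) by simp
  next
    assume "\<exists>l C r'. \<rho>21 = RExt l C r' \<and> closed_row r'"
    then show ?thesis using c_allR.prems(6) by auto
  qed
next
  case (c_rec r1 r2) then show ?case using rowRecE by blast
next
  case (c_var r1 r2) then show ?case using rowVarE by blast
next
  case (c_ext D C r1 r2 l')
  from closed_cases[OF c_ext(7)] show ?case
  proof
    assume "\<rho>21 = REmpty" then show ?thesis using c_ext.prems(1,2,5,6) base_case assms(2) by simp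
  next
    assume "\<exists>l C r'. \<rho>21 = RExt l C r' \<and> closed_row r'"
    then obtain l0 C0 r' where e: "\<rho>21 = RExt l0 C0 r'" "closed_row r'" by blast
    have "l0 = l'" "C0 = C" "r2 = rcat r' \<rho>22" using c_ext(10) e by auto
    moreover have "is_type D" "is_row r1" using c_ext(6) by (auto elim: rowE)
    moreover have "is_row r'" using c_ext(8) e by (auto elim: rowE)
    moreover have "l \<notin> rdom r'" "l \<noteq> l'" using c_ext(11) e \<open>l0 = l'\<close> by auto
    ultimately have "CC A B l r1 r' \<rho>22" 
      apply - apply (rule c_ext.IH(2)[of r' \<rho>22])
      using c_ext.hyps(2) c_ext.prems(5) e by auto
    from ext_case[OF this c_ext(1) \<open>is_type D\<close> \<open>l \<noteq> l'\<close>]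
    show ?thesis using e \<open>l0 = l'\<close> \<open>C0 = C\<close> by simp
  qed
next
  case (c_extL l' r2 r1 D)
  have "is_type D" "is_row r1" using c_extL(6) by (auto elim: rowE)
  then have IH: "CC A B l r1 \<rho>21 \<rho>22" using c_extL.IH[of \<rho>21 \<rho>22] c_extL.hyps(3) c_extL.prems by simp
  show ?case
  proof (cases "l' = l")
    case True
    then show ?thesis using extL_case_eq[OF IH c_extL.prems(3) \<open>is_type D\<close>] c_extL.hyps(1,2) c_extL.prems(6) by simp
  next
    case False
    then show ?thesis using extL_case_ne[OF IH c_extL.prems(3) \<open>is_type D\<close>] c_extL.hyps(1,2) c_extL.prems(6) by simp
  qed
next
  case (c_extR l' r1 r2 C)
  from closed_cases[OF c_extR(7)] show ?case
  proof
    assume "\<rho>21 = REmpty" then show ?thesis using c_extR.prems(1,2,5,6) base_case assms(2) by simp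
  next
    assume "\<exists>l C r'. \<rho>21 = RExt l C r' \<and> closed_row r'"
    then obtain l0 C0 r' where e: "\<rho>21 = RExt l0 C0 r'" "closed_row r'" by blast
    have "l0 = l'" "C0 = C" "r2 = rcat r' \<rho>22" using c_extR(10) e by auto
    moreover have "is_row r'" using c_extR(8) e by (auto elim: rowE)
    moreover have "l \<notin> rdom r'" "l \<noteq> l'" using c_extR(11) e \<open>l0 = l'\<close> by auto
    ultimately have "CC A B l r1 r' \<rho>22" using c_extR.IH[of r' \<rho>22] c_extR.hyps(3) c_extR.prems(2,5) e by simp
    from extR_case[OF this \<open>l \<noteq> l'\<close> c_extR(1,2)]
    show ?thesis using e \<open>l0 = l'\<close> \<open>C0 = C\<close> by simp
  qed
qed

theorem mainTheorem12:
  assumes "is_type A" and "is_type B" and "A \<sim> B"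
    and "is_row \<rho>1" and "is_row \<rho>21" and "is_row \<rho>22"
    and "closed_row \<rho>21"
    and "\<rho>1 \<sim> rcat \<rho>21 \<rho>22"
    and "l \<notin> rdom \<rho>21"
  shows "\<exists>\<rho>11 \<rho>12. is_row \<rho>11 \<and> is_row \<rho>12 \<and> closed_row \<rho>11 \<and>
           \<rho>1 \<equiv>\<^sub>t rcat \<rho>11 \<rho>12 \<and>
           rcat \<rho>11 (RExt l A \<rho>12) \<sim> rcat \<rho>21 (RExt l B \<rho>22) \<and>
           (ends_dyn (rcat \<rho>21 \<rho>22) \<longrightarrow>
              (\<forall>\<rho>3. is_row \<rho>3 \<and> closed_row \<rho>3 \<and> rdom \<rho>3 \<inter> rdom (rcat \<rho>21 \<rho>22) = {} \<longrightarrow>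
                 rcat \<rho>11 (RExt l A (rcat \<rho>3 \<rho>12)) \<sim> rcat \<rho>21 (RExt l B \<rho>22))) \<and>
           l \<notin> rdom \<rho>11"
  using main[OF assms(8) assms(3) assms(8) assms(4) assms(7) assms(5) assms(6) refl assms(9)]
  unfolding CC_def .

end
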